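(* Let $a=\{a_1,\dots,a_m\}\subseteq\mathbb{Z}_{\ge 2}$. Then for every $n\ge0$, $$r(\mathcal{A}_n(a))=\sum_{i=0}^n\binom{n}{i}\,r(\widetilde{\mathcal{C}}_i)\,r(\widetilde{\mathcal{C}}_{n-i}).$$
   Context: For a set $a=\{a_1,\dots,a_m\}$ of integers $\ge2$ and $n\ge 1$, $\mathcal{A}_n(a)$ denotes the hyperplane arrangement in $\mathbb{R}^n$ consisting of the hyperplanes $x_i=0$ ($1\le i\le n$), $x_i=x_j$ ($1\le i<j\le n$), and $x_i=a_rx_j$ ($1\le i\neq j\le n$, $1\le r\le m$). $\widetilde{\mathcal{C}}_n$ denotes the arrangement in $\mathbb{R}^n$ consisting of the hyperplanes $x_i-x_j=0$ ($1\le i<j\le n$) and $x_i-x_j=\log a_r/\log a_1$ ($1\le i\neq j\le n$, $1\le r\le m$; for $r=1$ this is $x_i-x_j=1$). For $n=0$ both are empty arrangements in $\mathbb{R}^0$ with one region. $r(\mathcal{A})$ denotes the number of connected components of $\mathbb{R}^n\setminus\bigcup_{H\in\mathcal{A}}H$. *)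

theory Defs
  imports "HOL-Analysis.Analysis"
begin

text \<open>R^n is modelled as the subspace of nat => real (product topology) of functions
vanishing outside {0..<n}; coordinates x_1..x_n are x 0 .. x (n-1).\<close>

definition Rn :: "nat \<Rightarrow> (nat \<Rightarrow> real) set" where
  "Rn n = {x. \<forall>i\<ge>n. x i = 0}"

definition num_regions :: "(nat \<Rightarrow> real) set \<Rightarrow> nat" where
  "num_regions S = card (components S)"

definition A_compl :: "nat list \<Rightarrow> nat \<Rightarrow> (nat \<Rightarrow> real) set" where
  "A_compl a n = {x \<in> Rn n.
      (\<forall>i<n. x i \<noteq> 0) \<and>
      (\<forall>i<n. \<forall>j<n. i < j \<longrightarrow> x i \<noteq> x j) \<and>
      (\<forall>i<n. \<forall>j<n. i \<noteq> j \<longrightarrow> (\<forall>r \<in> set a. x i \<noteq> real r * x j))}"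

definition C_compl :: "nat list \<Rightarrow> nat \<Rightarrow> (nat \<Rightarrow> real) set" where
  "C_compl a n = {x \<in> Rn n.
      (\<forall>i<n. \<forall>j<n. i < j \<longrightarrow> x i - x j \<noteq> 0) \<and>
      (\<forall>i<n. \<forall>j<n. i \<noteq> j \<longrightarrow> (\<forall>r \<in> set a. x i - x j \<noteq> ln (real r) / ln (real (hd a))))}"

end

theory Submission
  imports Defs
begin

lemma comps_bridge: "components S = connected_components_of (top_of_set S)"
proof -
  have "connected_component_of (top_of_set S) x = connected_component S x" for x
    by (auto simp: fun_eq_iff connected_component_of_def connected_component_def connectedin_subtopology)
  then show ?thesis by (simp add: components_def connected_components_of_def)
qed

lemma comps_homeo:
  assumes "homeomorphic_map X Y f"
  shows "card (connected_components_of Y) = card (connected_components_of X)"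
    "finite (connected_components_of Y) \<longleftrightarrow> finite (connected_components_of X)"
proof -
  have e: "connected_components_of Y = (image f) ` (connected_components_of X)"
    by (rule homeomorphic_map_connected_components_of[OF assms])
  have "inj_on f (\<Union>(connected_components_of X))"
    using assms by (simp add: homeomorphic_map_def Union_connected_components_of)
  then have i: "inj_on (image f) (connected_components_of X)" by (rule inj_on_image)
  show "card (connected_components_of Y) = card (connected_components_of X)"
    unfolding e using card_image[OF i] .
  show "finite (connected_components_of Y) \<longleftrightarrow> finite (connected_components_of X)"
    unfolding e using finite_image_iff[OF i] .
qed

lemma comps_prod:
  "card (connected_components_of (prod_topology X Y)) = card (connected_components_of X) * card (connected_components_of Y)"
  "finite (connected_components_of X) \<Longrightarrow> finite (connected_components_of Y) \<Longrightarrow> finite (connected_components_of (prod_topology X Y))"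
proof -
  have e: "connected_components_of (prod_topology X Y) = (\<lambda>(C,D). C \<times> D) ` (connected_components_of X \<times> connected_components_of Y)"
    by (auto simp: connected_components_of_prod_topology)
  have i: "inj_on (\<lambda>(C,D). C \<times> D) (connected_components_of X \<times> connected_components_of Y)"
  proof (rule inj_onI, clarify)
    fix C D C' D' assume h: "C \<in> connected_components_of X" "D \<in> connected_components_of Y"
      "C' \<in> connected_components_of X" "D' \<in> connected_components_of Y" "C \<times> D = C' \<times> D'"
    have "C \<noteq> {}" "D \<noteq> {}" "C' \<noteq> {}" "D' \<noteq> {}"
      using h(1-4) nonempty_connected_components_of by blast+
    then show "C = C' \<and> D = D'" using h(5) unfolding times_eq_iff by simp
  qed
  show "card (connected_components_of (prod_topology X Y)) = card (connected_components_of X) * card (connected_components_of Y)"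
    using e i by (simp add: card_image card_cartesian_product)
  show "finite (connected_components_of X) \<Longrightarrow> finite (connected_components_of Y) \<Longrightarrow> finite (connected_components_of (prod_topology X Y))"
    using e by simp
qed

lemma finite_comps_union:
  assumes "finite F" "\<And>f. f \<in> F \<Longrightarrow> connected f" "S = \<Union>F"
  shows "finite (components S)"
proof -
  have "components S \<subseteq> (\<lambda>f. connected_component_set S (SOME x. x \<in> f)) ` F"
  proof
    fix C assume "C \<in> components S"
    then obtain x where x: "x \<in> S" "C = connected_component_set S x" by (auto simp: components_def)
    then obtain f where f: "f \<in> F" "x \<in> f" using assms(3) by auto
    define z where "z = (SOME x. x \<in> f)"
    have z: "z \<in> f" using f z_def by (metis someI_ex)
    have fS: "f \<subseteq> S" using f(1) assms(3) by blast
    have "connected_component S x z"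
      by (rule connected_componentI[OF assms(2)[OF f(1)] fS f(2) z])
    then have "C = connected_component_set S z" using x(2) connected_component_eq[of z S x] by simp
    then show "C \<in> (\<lambda>f. connected_component_set S (SOME x. x \<in> f)) ` F" using f z_def by auto
  qed
  then show ?thesis using assms(1) finite_subset by blast
qed

lemma clopen_comps:
  assumes "openin (top_of_set S) P" "closedin (top_of_set S) P"
  shows "components P = {C \<in> components S. C \<subseteq> P}"
proof -
  have PS: "P \<subseteq> S" using assms(1) openin_imp_subset by blast
  obtain U where U: "open U" "P = S \<inter> U" using assms(1) openin_open by metis
  obtain V where V: "closed V" "P = S \<inter> V" using assms(2) closedin_closed by metis
  have key: "connected_component_set P x = connected_component_set S x" if "x \<in> P" for x
  proof
    show "connected_component_set P x \<subseteq> connected_component_set S x"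
      using PS connected_component_mono by blast
    let ?C = "connected_component_set S x"
    have Cc: "connected ?C" by simp
    have CS: "?C \<subseteq> S" by (simp add: connected_component_subset)
    have e1: "?C \<inter> P = ?C \<inter> U" using CS U(2) by blast
    have e2: "?C \<inter> P = ?C \<inter> V" using CS V(2) by blast
    have o: "openin (top_of_set ?C) (?C \<inter> P)"
      unfolding e1 using U(1) by (rule openin_open_Int)
    have c: "closedin (top_of_set ?C) (?C \<inter> P)"
      unfolding e2 using V(1) by (rule closedin_closed_Int)
    have "?C \<inter> P = {} \<or> ?C \<inter> P = ?C" using Cc o c connected_clopen by blast
    moreover have xC: "x \<in> ?C" using that PS by (simp add: connected_component_refl subsetD)
    ultimately have CP: "?C \<subseteq> P" using that by blast
    show "?C \<subseteq> connected_component_set P x"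
      by (rule connected_component_maximal[OF xC Cc CP])
  qed
  show ?thesis
  proof
    show "components P \<subseteq> {C \<in> components S. C \<subseteq> P}"
    proof clarify
      fix C assume "C \<in> components P"
      then obtain x where x: "x \<in> P" "C = connected_component_set P x" by (auto simp: components_def)
      then have "C \<subseteq> P" by (simp add: connected_component_subset)
      moreover have "C \<in> components S" using x key[OF x(1)] PS by (auto simp: components_def)
      ultimately show "C \<in> components S \<and> C \<subseteq> P" by blast
    qed
    show "{C \<in> components S. C \<subseteq> P} \<subseteq> components P"
    proof clarify
      fix C assume C: "C \<in> components S" "C \<subseteq> P"
      then obtain x where x: "x \<in> S" "C = connected_component_set S x" by (auto simp: components_def)
      have "x \<in> C" using x connected_component_refl by simp
      then have xP: "x \<in> P" using C(2) by blast
      have "C = connected_component_set P x" using key[OF xP] x(2) by simp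
      then show "C \<in> components P" using xP by (simp add: componentsI)
    qed
  qed
qed

lemma card_comps_partition:
  assumes J: "finite J" and op: "\<And>j. j\<in>J \<Longrightarrow> openin (top_of_set A) (P j)"
    and cl: "\<And>j. j\<in>J \<Longrightarrow> closedin (top_of_set A) (P j)"
    and dis: "\<And>j k. j\<in>J \<Longrightarrow> k\<in>J \<Longrightarrow> j\<noteq>k \<Longrightarrow> P j \<inter> P k = {}"
    and un: "A = (\<Union>j\<in>J. P j)" and fin: "\<And>j. j\<in>J \<Longrightarrow> finite (components (P j))"
  shows "card (components A) = (\<Sum>j\<in>J. card (components (P j)))"
proof -
  have cp: "components (P j) = {C \<in> components A. C \<subseteq> P j}" if "j \<in> J" for j
    by (rule clopen_comps[OF op[OF that] cl[OF that]])
  have eq: "components A = (\<Union>j\<in>J. components (P j))"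
  proof
    show "components A \<subseteq> (\<Union>j\<in>J. components (P j))"
    proof
      fix C assume C: "C \<in> components A"
      then obtain x where x: "x \<in> A" "C = connected_component_set A x" by (auto simp: components_def)
      then obtain j where j: "j \<in> J" "x \<in> P j" using un by auto
      have D: "connected_component_set (P j) x \<in> components (P j)" using j by (simp add: componentsI)
      then have DA: "connected_component_set (P j) x \<in> components A"
        using cp[OF j(1)] by auto
      have "x \<in> connected_component_set (P j) x" using j by (simp add: connected_component_refl)
      moreover have "x \<in> C" using x by (simp add: connected_component_refl)
      ultimately have "connected_component_set (P j) x \<inter> C \<noteq> {}" by blast
      then have "connected_component_set (P j) x = C"
        using components_eq[OF DA C] by simp
      then show "C \<in> (\<Union>j\<in>J. components (P j))" using j D by auto
    qed
    show "(\<Union>j\<in>J. components (P j)) \<subseteq> components A" using cp by auto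
  qed
  have dj: "components (P j) \<inter> components (P k) = {}" if "j\<in>J" "k\<in>J" "j\<noteq>k" for j k
  proof (rule ccontr)
    assume "components (P j) \<inter> components (P k) \<noteq> {}"
    then obtain D where D: "D \<in> components (P j)" "D \<in> components (P k)" by blast
    have "D \<subseteq> P j" "D \<subseteq> P k" "D \<noteq> {}"
      using D in_components_subset in_components_nonempty by blast+
    then show False using dis[OF that] by blast
  qed
  show ?thesis unfolding eq using fin dj by (intro card_UN_disjoint[OF J]) auto
qed

lemma homeo_comps_card:
  fixes f :: "'a::topological_space \<Rightarrow> 'b::topological_space"
  assumes "continuous_on S f" "f \<in> S \<rightarrow> T" "continuous_on T g" "g \<in> T \<rightarrow> S"
    "\<And>x. x\<in>S \<Longrightarrow> g (f x) = x" "\<And>y. y\<in>T \<Longrightarrow> f (g y) = y"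
  shows "card (components T) = card (components S)"
    "finite (components T) \<longleftrightarrow> finite (components S)"
proof -
  have "homeomorphic_maps (top_of_set S) (top_of_set T) f g"
    using assms by (simp add: homeomorphic_maps_def)
  then have h: "homeomorphic_map (top_of_set S) (top_of_set T) f"
    using homeomorphic_map_maps by blast
  show "card (components T) = card (components S)"
    "finite (components T) \<longleftrightarrow> finite (components S)"
    using comps_homeo[OF h] by (simp_all add: comps_bridge)
qed

lemma comps_times:
  fixes S :: "'a::topological_space set" and T :: "'b::topological_space set"
  shows "card (components (S \<times> T)) = card (components S) * card (components T)"
    "finite (components S) \<Longrightarrow> finite (components T) \<Longrightarrow> finite (components (S \<times> T))"
proof -
  have e: "top_of_set (S \<times> T) = prod_topology (top_of_set S) (top_of_set T)"
    using subtopology_Times[of euclidean euclidean S T] by (simp only: prod_topology_euclidean)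
  show "card (components (S \<times> T)) = card (components S) * card (components T)"
    unfolding comps_bridge e by (rule comps_prod(1))
  show "finite (components S) \<Longrightarrow> finite (components T) \<Longrightarrow> finite (components (S \<times> T))"
    unfolding comps_bridge e by (rule comps_prod(2))
qed

definition Cg :: "nat list \<Rightarrow> nat set \<Rightarrow> (nat \<Rightarrow> real) set" where
  "Cg a I = {y. (\<forall>i. i \<notin> I \<longrightarrow> y i = 0) \<and>
     (\<forall>i\<in>I. \<forall>j\<in>I. i \<noteq> j \<longrightarrow> y i \<noteq> y j \<and> (\<forall>r\<in>set a. y i - y j \<noteq> ln (real r) / ln (real (hd a))))}"

lemma C_compl_Cg: "C_compl a k = Cg a {..<k}"
  unfolding C_compl_def Cg_def Rn_def
  apply (auto simp: not_less)
  by (metis linorder_neqE_nat eq_iff_diff_eq_0)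

lemma conv_side:
  fixes a b c t :: real
  assumes "0\<le>t" "t\<le>1" "a > c" "b > c" shows "(1-t)*a + t*b > c"
proof (cases "t = 0")
  case True then show ?thesis using assms by simp
next
  case False
  then have "t*(b-c) > 0" using assms by simp
  moreover have "(1-t)*(a-c) \<ge> 0" using assms by simp
  ultimately have "(1-t)*(a-c) + t*(b-c) > 0" by linarith
  then show ?thesis by (simp add: algebra_simps)
qed

lemma conv_side2:
  fixes a b c t :: real
  assumes "0\<le>t" "t\<le>1" "a \<noteq> c" "b \<noteq> c" "a > c \<longleftrightarrow> b > c"
  shows "(1-t)*a + t*b \<noteq> c \<and> ((1-t)*a + t*b > c \<longleftrightarrow> a > c)"
proof (cases "a > c")
  case True
  then have "b > c" using assms(5) by simp
  then have "(1-t)*a + t*b > c" by (rule conv_side[OF assms(1,2) True])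
  then show ?thesis using True by simp
next
  case False
  then have a: "-a > -c" using assms(3) by simp
  then have "-b > -c" using assms(4,5) False by simp
  then have "(1-t)*(-a) + t*(-b) > -c" by (rule conv_side[OF assms(1,2) a])
  then show ?thesis using False by (simp add: algebra_simps)
qed

lemma finite_comps_Cg:
  assumes "finite I"
  shows "finite (components (Cg a I))"
proof -
  define L where "L = ln (real (hd a))"
  define K where "K = insert 0 ((\<lambda>r. ln (real r) / L) ` set a)"
  define sig where "sig y = {(i,j,c). i\<in>I \<and> j\<in>I \<and> c\<in>K \<and> y i - y j > c}" for y :: "nat \<Rightarrow> real"
  define F where "F = (\<lambda>s. {y\<in>Cg a I. sig y = s}) ` Pow (I\<times>I\<times>K)"
  have fK: "finite K" by (simp add: K_def)
  have "finite F" unfolding F_def using assms fK by simp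
  moreover have "Cg a I = \<Union>F"
  proof
    show "Cg a I \<subseteq> \<Union>F"
    proof
      fix y assume "y \<in> Cg a I"
      moreover have "sig y \<in> Pow (I\<times>I\<times>K)" by (auto simp: sig_def)
      then have "{y'\<in>Cg a I. sig y' = sig y} \<in> F" unfolding F_def by (rule imageI)
      ultimately show "y \<in> \<Union>F" by (intro UnionI[of "{y'\<in>Cg a I. sig y' = sig y}"]) auto
    qed
    show "\<Union>F \<subseteq> Cg a I" unfolding F_def by auto
  qed
  moreover have conn: "connected f" if "f \<in> F" for f
  proof -
    obtain s where fs: "f = {y\<in>Cg a I. sig y = s}" using \<open>f\<in>F\<close> F_def by auto
    have "path_connected f"
      unfolding path_connected_def
    proof (intro ballI)
      fix y z assume y: "y \<in> f" and z: "z \<in> f"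
      define g where "g t = (\<lambda>i. (1-t) * y i + t * z i)" for t :: real
      have ne: "y i - y j \<noteq> c" "z i - z j \<noteq> c" if "i\<in>I" "j\<in>I" "i\<noteq>j" "c\<in>K" for i j c
      proof -
        have yz: "y \<in> Cg a I" "z \<in> Cg a I" using y z fs by auto
        have "c = 0 \<or> (\<exists>r\<in>set a. c = ln (real r) / ln (real (hd a)))" using that(4) by (auto simp: K_def L_def)
        then show "y i - y j \<noteq> c" "z i - z j \<noteq> c" using yz that(1-3) unfolding Cg_def by auto
      qed
      have same: "y i - y j > c \<longleftrightarrow> z i - z j > c" if "i\<in>I" "j\<in>I" "c\<in>K" for i j c
      proof -
        have "sig y = sig z" using y z fs by simp
        then have "(i,j,c) \<in> sig y \<longleftrightarrow> (i,j,c) \<in> sig z" by simp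
        then show ?thesis using that by (simp add: sig_def)
      qed
      have gin: "g t \<in> f" if t: "0 \<le> t" "t \<le> 1" for t
      proof -
        have d: "g t i - g t j = (1-t)*(y i - y j) + t*(z i - z j)" for i j
          by (simp add: g_def algebra_simps)
        have cs: "g t i - g t j \<noteq> c \<and> (g t i - g t j > c \<longleftrightarrow> y i - y j > c)"
          if "i\<in>I" "j\<in>I" "i\<noteq>j" "c\<in>K" for i j c
          unfolding d using conv_side2[OF t ne[OF that] same[OF that(1,2,4)]] .
        have "g t \<in> Cg a I"
        proof -
          have "\<forall>i. i \<notin> I \<longrightarrow> g t i = 0" using y z fs by (simp add: g_def Cg_def)
          moreover have "g t i \<noteq> g t j" if "i\<in>I" "j\<in>I" "i\<noteq>j" for i j
            using cs[OF that, of 0] by (simp add: K_def)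
          moreover have "g t i - g t j \<noteq> ln (real r) / ln (real (hd a))"
            if "i\<in>I" "j\<in>I" "i\<noteq>j" "r \<in> set a" for i j r
          proof -
            have "ln (real r) / L \<in> K" using that(4) unfolding K_def by blast
            then show ?thesis using cs[OF that(1,2,3), of "ln (real r) / L"] by (simp add: L_def)
          qed
          ultimately show ?thesis by (simp add: Cg_def)
        qed
        moreover have "sig (g t) = sig y"
        proof -
          have "(g t i - g t j > c) = (y i - y j > c)" if "i\<in>I" "j\<in>I" "c\<in>K" for i j c
          proof (cases "i = j")
            case True then show ?thesis by simp
          next
            case False then show ?thesis using cs[OF that(1,2) False that(3)] by blast
          qed
          then show ?thesis by (auto simp: sig_def)
        qed
        ultimately show ?thesis using y fs by simp
      qed
      have "path g"
        unfolding path_def g_def by (intro continuous_intros)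
      moreover have "path_image g \<subseteq> f" unfolding path_image_def using gin by auto
      moreover have "pathstart g = y" "pathfinish g = z" by (auto simp: pathstart_def pathfinish_def g_def)
      ultimately show "\<exists>g. path g \<and> path_image g \<subseteq> f \<and> pathstart g = y \<and> pathfinish g = z" by blast
    qed
    then show ?thesis by (rule path_connected_imp_connected)
  qed
  ultimately show ?thesis using finite_comps_union[of F "Cg a I"] conn by blast
qed

lemma proj_cont: "continuous_on S (\<lambda>y::nat\<Rightarrow>real. y k)"
  by (rule continuous_on_subset[OF continuous_on_product_coordinates]) simp

lemma fst_proj_cont: "continuous_on S (\<lambda>p::(nat\<Rightarrow>real)\<times>(nat\<Rightarrow>real). fst p k)"
  by (rule continuous_on_product_then_coordinatewise[OF continuous_on_fst[OF continuous_on_id]])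

lemma snd_proj_cont: "continuous_on S (\<lambda>p::(nat\<Rightarrow>real)\<times>(nat\<Rightarrow>real). snd p k)"
  by (rule continuous_on_product_then_coordinatewise[OF continuous_on_snd[OF continuous_on_id]])

lemma ifproj_cont: "continuous_on S (\<lambda>x::nat\<Rightarrow>real. if P then x k else 0)"
  by (cases P) (simp_all add: proj_cont)

lemma Cg_reindex:
  assumes "finite I" "finite J" "card I = card J"
  shows "card (components (Cg a J)) = card (components (Cg a I))"
proof -
  obtain h where h: "bij_betw h J I" using finite_same_card_bij assms by metis
  define h' where "h' = inv_into J h"
  have h': "bij_betw h' I J" unfolding h'_def using h by (rule bij_betw_inv_into)
  define f where "f y = (\<lambda>j. if j \<in> J then y (h j) else 0)" for y :: "nat \<Rightarrow> real"
  define g where "g z = (\<lambda>i. if i \<in> I then z (h' i) else 0)" for z :: "nat \<Rightarrow> real"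
  have hJ: "h j \<in> I" if "j \<in> J" for j using h that bij_betw_apply by metis
  have h'I: "h' i \<in> J" if "i \<in> I" for i using h' that bij_betw_apply by metis
  have hh': "h (h' i) = i" if "i \<in> I" for i using h that unfolding h'_def by (simp add: bij_betw_inv_into_right)
  have h'h: "h' (h j) = j" if "j \<in> J" for j using h that unfolding h'_def by (simp add: bij_betw_inv_into_left)
  have hinj: "h j \<noteq> h j'" if "j\<in>J" "j'\<in>J" "j\<noteq>j'" for j j' using h that by (metis h'h)
  have h'inj: "h' i \<noteq> h' i'" if "i\<in>I" "i'\<in>I" "i\<noteq>i'" for i i' using that by (metis hh')
  show ?thesis
  proof (rule homeo_comps_card[of _ f _ g])
    show "continuous_on (Cg a I) f"
      unfolding f_def by (intro continuous_on_coordinatewise_then_product) (rule ifproj_cont)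
    show "continuous_on (Cg a J) g"
      unfolding g_def by (intro continuous_on_coordinatewise_then_product) (rule ifproj_cont)
    show "f \<in> Cg a I \<rightarrow> Cg a J"
    proof
      fix y assume y: "y \<in> Cg a I"
      have "\<forall>j. j \<notin> J \<longrightarrow> f y j = 0" by (simp add: f_def)
      moreover have "f y j \<noteq> f y j' \<and> (\<forall>r\<in>set a. f y j - f y j' \<noteq> ln (real r) / ln (real (hd a)))"
        if "j\<in>J" "j'\<in>J" "j\<noteq>j'" for j j'
      proof -
        have "y (h j) \<noteq> y (h j') \<and> (\<forall>r\<in>set a. y (h j) - y (h j') \<noteq> ln (real r) / ln (real (hd a)))"
        proof -
          have "\<forall>i\<in>I. \<forall>j\<in>I. i \<noteq> j \<longrightarrow> y i \<noteq> y j \<and> (\<forall>r\<in>set a. y i - y j \<noteq> ln (real r) / ln (real (hd a)))"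
            using y by (simp add: Cg_def)
          then show ?thesis using hJ[OF that(1)] hJ[OF that(2)] hinj[OF that] by simp
        qed
        then show ?thesis using that by (simp add: f_def)
      qed
      ultimately show "f y \<in> Cg a J" unfolding Cg_def by simp
    qed
    show "g \<in> Cg a J \<rightarrow> Cg a I"
    proof
      fix y assume y: "y \<in> Cg a J"
      have "\<forall>j. j \<notin> I \<longrightarrow> g y j = 0" by (simp add: g_def)
      moreover have "g y j \<noteq> g y j' \<and> (\<forall>r\<in>set a. g y j - g y j' \<noteq> ln (real r) / ln (real (hd a)))"
        if "j\<in>I" "j'\<in>I" "j\<noteq>j'" for j j'
      proof -
        have "y (h' j) \<noteq> y (h' j') \<and> (\<forall>r\<in>set a. y (h' j) - y (h' j') \<noteq> ln (real r) / ln (real (hd a)))"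
        proof -
          have "\<forall>i\<in>J. \<forall>j\<in>J. i \<noteq> j \<longrightarrow> y i \<noteq> y j \<and> (\<forall>r\<in>set a. y i - y j \<noteq> ln (real r) / ln (real (hd a)))"
            using y by (simp add: Cg_def)
          then show ?thesis using h'I[OF that(1)] h'I[OF that(2)] h'inj[OF that] by simp
        qed
        then show ?thesis using that by (simp add: g_def)
      qed
      ultimately show "g y \<in> Cg a I" unfolding Cg_def by simp
    qed
    show "g (f x) = x" if "x \<in> Cg a I" for x
    proof
      fix i show "g (f x) i = x i"
      proof (cases "i \<in> I")
        case True then show ?thesis using h'I hh' by (simp add: f_def g_def)
      next
        case False then show ?thesis using that by (simp add: g_def Cg_def)
      qed
    qed
    show "f (g y) = y" if "y \<in> Cg a J" for y
    proof
      fix i show "f (g y) i = y i"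
      proof (cases "i \<in> J")
        case True then show ?thesis using hJ h'h by (simp add: f_def g_def)
      next
        case False then show ?thesis using that by (simp add: f_def Cg_def)
      qed
    qed
  qed
qed

lemma Cg_card:
  assumes "finite I"
  shows "card (components (Cg a I)) = num_regions (C_compl a (card I))"
  unfolding num_regions_def C_compl_Cg using Cg_reindex[of "{..<card I}" I a] assms by simp

lemma ln_rel:
  fixes L \<alpha> \<beta> r :: real
  assumes "L > 0" "\<alpha> > 0" "\<beta> > 0" "r > 0"
  shows "\<alpha> = r * \<beta> \<longleftrightarrow> ln \<alpha> / L - ln \<beta> / L = ln r / L"
proof -
  have "\<alpha> = r * \<beta> \<longleftrightarrow> ln \<alpha> = ln (r * \<beta>)" using assms by simp
  also have "\<dots> \<longleftrightarrow> ln \<alpha> = ln r + ln \<beta>" using assms by (simp add: ln_mult)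
  also have "\<dots> \<longleftrightarrow> ln \<alpha> / L - ln \<beta> / L = ln r / L" using assms by (auto simp: field_simps)
  finally show ?thesis .
qed

lemma ln_eq_div:
  fixes L \<alpha> \<beta> :: real
  assumes "L > 0" "\<alpha> > 0" "\<beta> > 0"
  shows "\<alpha> = \<beta> \<longleftrightarrow> ln \<alpha> / L = ln \<beta> / L"
  using assms by auto

lemma homeo_comps_both:
  fixes f :: "'a::topological_space \<Rightarrow> 'b::topological_space"
  assumes "continuous_on S f" "f \<in> S \<rightarrow> T" "continuous_on T g" "g \<in> T \<rightarrow> S"
    "\<And>x. x\<in>S \<Longrightarrow> g (f x) = x" "\<And>y. y\<in>T \<Longrightarrow> f (g y) = y"
  shows "card (components T) = card (components S) \<and> (finite (components T) \<longleftrightarrow> finite (components S))"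
  using homeo_comps_card[OF assms] by blast

definition Pg :: "nat list \<Rightarrow> nat \<Rightarrow> nat set \<Rightarrow> (nat \<Rightarrow> real) set" where
  "Pg a n S = {x \<in> A_compl a n. \<forall>i<n. (i \<in> S \<longleftrightarrow> x i > 0)}"

lemma Pg_comps:
  assumes a: "a \<noteq> []" "\<forall>r \<in> set a. r \<ge> 2" and S: "S \<subseteq> {..<n}"
  shows "card (components (Pg a n S)) = card (components (Cg a S)) * card (components (Cg a ({..<n} - S)))"
    "finite (components (Pg a n S))"
proof -
  define T where "T = {..<n} - S"
  define L where "L = ln (real (hd a))"
  have "hd a \<in> set a" using a by simp
  then have "hd a \<ge> 2" using a by blast
  then have "real (hd a) > 1" by simp
  then have L: "L > 0" unfolding L_def by simp
  have rpos: "real r > 0" if "r \<in> set a" for r using a that by force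
  define F where "F x = ((\<lambda>i. if i \<in> S then ln (x i) / L else 0), (\<lambda>i. if i \<in> T then ln (- x i) / L else 0))"
    for x :: "nat \<Rightarrow> real"
  define G where "G p = (\<lambda>i. if i \<in> S then exp (L * fst p i) else if i \<in> T then - exp (L * snd p i) else (0::real))"
    for p :: "(nat \<Rightarrow> real) \<times> (nat \<Rightarrow> real)"
  have Pprops: "(\<forall>i\<in>S. x i > 0) \<and> (\<forall>i\<in>T. x i < 0) \<and> (\<forall>i. i \<notin> S \<and> i \<notin> T \<longrightarrow> x i = 0)"
    if "x \<in> Pg a n S" for x
  proof -
    have x: "x \<in> A_compl a n" "\<forall>i<n. (i \<in> S \<longleftrightarrow> x i > 0)" using that by (auto simp: Pg_def)
    have "\<forall>i<n. x i \<noteq> 0" "x \<in> Rn n" using x(1) by (auto simp: A_compl_def)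
    then have nz: "\<forall>i<n. x i \<noteq> 0" and R: "\<forall>i\<ge>n. x i = 0" unfolding Rn_def by auto
    have "x i > 0" if "i \<in> S" for i using that S x(2) by auto
    moreover have "x i < 0" if "i \<in> T" for i
    proof -
      have "i < n" "i \<notin> S" using that by (auto simp: T_def)
      then show ?thesis using x(2) nz by force
    qed
    moreover have "x i = 0" if "i \<notin> S" "i \<notin> T" for i
    proof -
      have "\<not> i < n" using that by (auto simp: T_def)
      then show ?thesis using R by simp
    qed
    ultimately show ?thesis by blast
  qed
  have xdist: "x i \<noteq> x j \<and> (\<forall>r\<in>set a. x i \<noteq> real r * x j)"
    if "x \<in> Pg a n S" "i < n" "j < n" "i \<noteq> j" for x i j
  proof -
    have A: "x \<in> A_compl a n" using that(1) by (simp add: Pg_def)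
    have d1: "\<forall>i<n. \<forall>j<n. i < j \<longrightarrow> x i \<noteq> x j" using A by (simp add: A_compl_def)
    have d2: "\<forall>i<n. \<forall>j<n. i \<noteq> j \<longrightarrow> (\<forall>r \<in> set a. x i \<noteq> real r * x j)" using A by (simp add: A_compl_def)
    have "x i \<noteq> x j"
    proof (cases "i < j")
      case True then show ?thesis using d1 that(2,3) by blast
    next
      case False then have "j < i" using that(4) by simp
      then show ?thesis using d1 that(2,3) by metis
    qed
    then show ?thesis using d2 that(2-4) by blast
  qed
  have ST: "S \<union> T = {..<n}" "S \<inter> T = {}" using S by (auto simp: T_def)
  have "card (components (Cg a S \<times> Cg a T)) = card (components (Pg a n S)) \<and>
     (finite (components (Cg a S \<times> Cg a T)) \<longleftrightarrow> finite (components (Pg a n S)))"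
  proof (rule homeo_comps_both[of _ F _ G])
    show "continuous_on (Pg a n S) F"
      unfolding F_def
    proof (intro continuous_on_Pair continuous_on_coordinatewise_then_product)
      fix i
      show "continuous_on (Pg a n S) (\<lambda>x. if i \<in> S then ln (x i) / L else 0)"
      proof (cases "i \<in> S")
        case True
        then show ?thesis using Pprops L by (auto intro!: continuous_intros proj_cont) fastforce
      qed simp
      show "continuous_on (Pg a n S) (\<lambda>x. if i \<in> T then ln (- x i) / L else 0)"
      proof (cases "i \<in> T")
        case True
        then show ?thesis using Pprops L by (auto intro!: continuous_intros proj_cont) fastforce
      qed simp
    qed
    show "continuous_on (Cg a S \<times> Cg a T) G"
      unfolding G_def
    proof (intro continuous_on_coordinatewise_then_product)
      fix i
      have c1: "continuous_on (Cg a S \<times> Cg a T) (\<lambda>x. exp (L * fst x i))"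
        by (intro continuous_intros fst_proj_cont)
      have c2: "continuous_on (Cg a S \<times> Cg a T) (\<lambda>x. - exp (L * snd x i))"
        by (intro continuous_intros snd_proj_cont)
      show "continuous_on (Cg a S \<times> Cg a T) (\<lambda>x. if i \<in> S then exp (L * fst x i)
               else if i \<in> T then - exp (L * snd x i) else 0)"
        using c1 c2 by (cases "i \<in> S"; cases "i \<in> T") simp_all
    qed
    show "F \<in> Pg a n S \<rightarrow> Cg a S \<times> Cg a T"
    proof
      fix x assume x: "x \<in> Pg a n S"
      have pp: "\<forall>i\<in>S. x i > 0" "\<forall>i\<in>T. x i < 0" using Pprops[OF x] by auto
      have S1: "fst (F x) \<in> Cg a S"
      proof -
        have "ln (x i) / L \<noteq> ln (x j) / L \<and> (\<forall>r\<in>set a. ln (x i) / L - ln (x j) / L \<noteq> ln (real r) / L)"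
          if "i \<in> S" "j \<in> S" "i \<noteq> j" for i j
        proof -
          have ij: "i < n" "j < n" using that S by auto
          show ?thesis using xdist[OF x ij that(3)] ln_rel[OF L] ln_eq_div[OF L] pp that rpos by metis
        qed
        then show ?thesis by (simp add: Cg_def F_def L_def)
      qed
      have T1: "snd (F x) \<in> Cg a T"
      proof -
        have "ln (- x i) / L \<noteq> ln (- x j) / L \<and> (\<forall>r\<in>set a. ln (- x i) / L - ln (- x j) / L \<noteq> ln (real r) / L)"
          if "i \<in> T" "j \<in> T" "i \<noteq> j" for i j
        proof -
          have ij: "i < n" "j < n" using that by (auto simp: T_def)
          have "- x i > 0" "- x j > 0" using pp that by auto
          moreover have "- x i \<noteq> - x j \<and> (\<forall>r\<in>set a. - x i \<noteq> real r * (- x j))"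
            using xdist[OF x ij that(3)] by auto
          ultimately show ?thesis using ln_rel[OF L] ln_eq_div[OF L] rpos by metis
        qed
        then show ?thesis by (simp add: Cg_def F_def L_def)
      qed
      show "F x \<in> Cg a S \<times> Cg a T" using S1 T1 by (metis mem_Times_iff)
    qed
    show "G \<in> Cg a S \<times> Cg a T \<rightarrow> Pg a n S"
    proof
      fix p assume p: "p \<in> Cg a S \<times> Cg a T"
      obtain u v where uv: "p = (u, v)" "u \<in> Cg a S" "v \<in> Cg a T" using p by auto
      have Gi: "G p i = (if i \<in> S then exp (L * u i) else if i \<in> T then - exp (L * v i) else 0)" for i
        by (simp add: G_def uv)
      have sgn: "(G p i > 0 \<longleftrightarrow> i \<in> S) \<and> (G p i < 0 \<longleftrightarrow> i \<in> T)" for i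
        using ST by (auto simp: Gi)
      have Rn: "G p \<in> Rn n" unfolding Rn_def using ST S by (auto simp: Gi)
      have nz: "G p i \<noteq> 0" if "i < n" for i using that ST by (auto simp: Gi)
      have rel: "G p i \<noteq> G p j \<and> (\<forall>r\<in>set a. G p i \<noteq> real r * G p j)"
        if "i < n" "j < n" "i \<noteq> j" for i j
      proof (cases "i \<in> S")
        case iS: True
        show ?thesis
        proof (cases "j \<in> S")
          case True
          have "ln (G p i) / L = u i" "ln (G p j) / L = u j" using iS True L by (simp_all add: Gi)
          moreover have "u i \<noteq> u j \<and> (\<forall>r\<in>set a. u i - u j \<noteq> ln (real r) / L)"
            using uv(2) iS True that(3) by (simp add: Cg_def L_def)
          moreover have "G p i > 0" "G p j > 0" using sgn iS True by auto
          ultimately show ?thesis using ln_rel[OF L] rpos by metis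
        next
          case False
          then have "j \<in> T" using that ST by auto
          then have "G p i > 0" "G p j < 0" using sgn iS by auto
          then show ?thesis using rpos
            by (smt (verit) mult_pos_neg)
        qed
      next
        case iT0: False
        then have iT: "i \<in> T" using that ST by auto
        show ?thesis
        proof (cases "j \<in> T")
          case True
          have "ln (- G p i) / L = v i" "ln (- G p j) / L = v j" using iT True L ST by (auto simp: Gi)
          moreover have "v i \<noteq> v j \<and> (\<forall>r\<in>set a. v i - v j \<noteq> ln (real r) / L)"
            using uv(3) iT True that(3) by (simp add: Cg_def L_def)
          moreover have "- G p i > 0" "- G p j > 0" using sgn iT True by auto
          ultimately have "- G p i \<noteq> - G p j \<and> (\<forall>r\<in>set a. - G p i \<noteq> real r * (- G p j))"
            using ln_rel[OF L] rpos by metis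
          then show ?thesis by auto
        next
          case False
          then have "j \<in> S" using that ST by auto
          then have "G p i < 0" "G p j > 0" using sgn iT by auto
          then show ?thesis using rpos
            by (smt (verit) mult_pos_pos)
        qed
      qed
      have "G p \<in> A_compl a n" unfolding A_compl_def using Rn nz rel by auto
      then show "G p \<in> Pg a n S" unfolding Pg_def using sgn by auto
    qed
    show "G (F x) = x" if "x \<in> Pg a n S" for x
    proof
      fix i
      show "G (F x) i = x i"
        using Pprops[OF that] L ST by (auto simp: G_def F_def)
    qed
    show "F (G p) = p" if pp: "p \<in> Cg a S \<times> Cg a T" for p
    proof -
      obtain u v where uv: "p = (u, v)" "u \<in> Cg a S" "v \<in> Cg a T" using pp by auto
      have "fst (F (G p)) = u"
      proof
        fix i show "fst (F (G p)) i = u i" using uv L by (auto simp: F_def G_def Cg_def)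
      qed
      moreover have "snd (F (G p)) = v"
      proof
        fix i show "snd (F (G p)) i = v i" using uv L ST by (auto simp: F_def G_def Cg_def)
      qed
      ultimately show ?thesis using uv(1) by (metis prod.collapse)
    qed
  qed
  then show "card (components (Pg a n S)) = card (components (Cg a S)) * card (components (Cg a ({..<n} - S)))"
    "finite (components (Pg a n S))"
    using comps_times[of "Cg a S" "Cg a T"] finite_comps_Cg[of S a] finite_comps_Cg[of T a] S
    by (auto simp: T_def finite_subset)
qed

theorem mainTheorem11:
  fixes a :: "nat list" and n :: nat
  assumes "a \<noteq> []" and "distinct a" and "\<forall>r \<in> set a. r \<ge> 2"
  shows "num_regions (A_compl a n) =
    (\<Sum>i = 0..n. (n choose i) * num_regions (C_compl a i) * num_regions (C_compl a (n - i)))"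
proof -
  define A where "A = A_compl a n"
  define c where "c k = num_regions (C_compl a k)" for k
  define J where "J = Pow {..<n}"
  have fJ: "finite J" by (simp add: J_def)
  have nz: "\<forall>i<n. x i \<noteq> 0" if "x \<in> A" for x using that by (auto simp: A_def A_compl_def)
  define U where "U S = (\<Inter>i\<in>{..<n}. if i \<in> S then {x::nat\<Rightarrow>real. x i > 0} else {x. x i < 0})" for S
  define V where "V S = (\<Inter>i\<in>{..<n}. if i \<in> S then {x::nat\<Rightarrow>real. x i \<ge> 0} else {x. x i \<le> 0})" for S
  have Umem: "x \<in> U S \<longleftrightarrow> (\<forall>i<n. if i \<in> S then x i > 0 else x i < 0)" for x S
    by (auto simp: U_def)
  have Vmem: "x \<in> V S \<longleftrightarrow> (\<forall>i<n. if i \<in> S then x i \<ge> 0 else x i \<le> 0)" for x S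
    by (auto simp: V_def)
  have PU: "Pg a n S = A \<inter> U S" for S
  proof (intro set_eqI iffI)
    fix x assume x: "x \<in> Pg a n S"
    then have xA: "x \<in> A" and xs: "\<forall>i<n. (i \<in> S \<longleftrightarrow> x i > 0)" by (auto simp: Pg_def A_def)
    have "\<forall>i<n. if i \<in> S then x i > 0 else x i < 0"
    proof (intro allI impI)
      fix i assume i: "i < n"
      have "x i \<noteq> 0" using nz[OF xA] i by blast
      then show "if i \<in> S then x i > 0 else x i < 0" using xs i by auto
    qed
    then have "x \<in> U S" using Umem by blast
    then show "x \<in> A \<inter> U S" using xA by blast
  next
    fix x assume x: "x \<in> A \<inter> U S"
    then have xA: "x \<in> A" and xu: "\<forall>i<n. if i \<in> S then x i > 0 else x i < 0" using Umem by auto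
    have "\<forall>i<n. (i \<in> S \<longleftrightarrow> x i > 0)"
    proof (intro allI impI)
      fix i assume i: "i < n"
      show "i \<in> S \<longleftrightarrow> x i > 0" using xu i by (cases "i \<in> S") auto
    qed
    then show "x \<in> Pg a n S" using xA by (simp add: Pg_def A_def)
  qed
  have PV: "Pg a n S = A \<inter> V S" for S
  proof (intro set_eqI iffI)
    fix x assume x: "x \<in> Pg a n S"
    then have xA: "x \<in> A" and xs: "\<forall>i<n. (i \<in> S \<longleftrightarrow> x i > 0)" by (auto simp: Pg_def A_def)
    have "\<forall>i<n. if i \<in> S then x i \<ge> 0 else x i \<le> 0"
    proof (intro allI impI)
      fix i assume i: "i < n"
      show "if i \<in> S then x i \<ge> 0 else x i \<le> 0" using xs i by auto
    qed
    then have "x \<in> V S" using Vmem by blast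
    then show "x \<in> A \<inter> V S" using xA by blast
  next
    fix x assume x: "x \<in> A \<inter> V S"
    then have xA: "x \<in> A" and xu: "\<forall>i<n. if i \<in> S then x i \<ge> 0 else x i \<le> 0" using Vmem by auto
    have "\<forall>i<n. (i \<in> S \<longleftrightarrow> x i > 0)"
    proof (intro allI impI)
      fix i assume i: "i < n"
      have "x i \<noteq> 0" using nz[OF xA] i by blast
      then show "i \<in> S \<longleftrightarrow> x i > 0" using xu i by (cases "i \<in> S") auto
    qed
    then show "x \<in> Pg a n S" using xA by (simp add: Pg_def A_def)
  qed
  have oU: "open (U S)" for S
    unfolding U_def
    by (intro open_INT) (auto intro!: open_Collect_less continuous_on_product_coordinates continuous_on_const)
  have cV: "closed (V S)" for S
    unfolding V_def
    by (intro closed_INT) (auto intro!: closed_Collect_le continuous_on_product_coordinates continuous_on_const)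
  have "card (components A) = (\<Sum>S\<in>J. card (components (Pg a n S)))"
  proof (rule card_comps_partition[OF fJ])
    show "openin (top_of_set A) (Pg a n S)" for S
      unfolding PU using oU by (simp add: openin_open_Int Int_commute)
    show "closedin (top_of_set A) (Pg a n S)" for S
      unfolding PV using cV by (simp add: closedin_closed_Int Int_commute)
    show "Pg a n S \<inter> Pg a n S' = {}" if "S \<in> J" "S' \<in> J" "S \<noteq> S'" for S S'
      using that by (auto simp: J_def Pg_def)
    show "A = (\<Union>S\<in>J. Pg a n S)"
    proof
      show "A \<subseteq> (\<Union>S\<in>J. Pg a n S)"
      proof
        fix x assume "x \<in> A"
        then have "x \<in> Pg a n {i. i < n \<and> x i > 0}" by (auto simp: Pg_def A_def)
        then show "x \<in> (\<Union>S\<in>J. Pg a n S)" by (auto simp: J_def)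
      qed
      show "(\<Union>S\<in>J. Pg a n S) \<subseteq> A" by (auto simp: Pg_def A_def)
    qed
    show "finite (components (Pg a n S))" if "S \<in> J" for S
      using Pg_comps assms that by (auto simp: J_def)
  qed
  also have "\<dots> = (\<Sum>S\<in>J. c (card S) * c (n - card S))"
  proof (rule sum.cong[OF refl])
    fix S assume S: "S \<in> J"
    then have Sn: "S \<subseteq> {..<n}" "finite S" by (auto simp: J_def finite_subset)
    have "card ({..<n} - S) = n - card S" using Sn by (simp add: card_Diff_subset)
    then show "card (components (Pg a n S)) = c (card S) * c (n - card S)"
      using Pg_comps(1)[OF assms(1,3) Sn(1)] Cg_card[OF Sn(2)] Cg_card[of "{..<n} - S"]
      by (simp add: c_def)
  qed
  also have "\<dots> = (\<Sum>i=0..n. \<Sum>S\<in>{S\<in>J. card S = i}. c (card S) * c (n - card S))"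
    by (rule sum.group[symmetric, OF fJ]) (auto simp: J_def card_mono[of "{..<n}", simplified] intro: order_trans[OF card_mono[of "{..<n}"]])
  also have "\<dots> = (\<Sum>i=0..n. (n choose i) * c i * c (n - i))"
  proof (rule sum.cong[OF refl])
    fix i
    have "card {S\<in>J. card S = i} = n choose i"
      using n_subsets[of "{..<n}" i] by (simp add: J_def)
    moreover have "(\<Sum>S\<in>{S\<in>J. card S = i}. c (card S) * c (n - card S)) = (\<Sum>S\<in>{S\<in>J. card S = i}. c i * c (n - i))"
      by (rule sum.cong) auto
    ultimately show "(\<Sum>S\<in>{S\<in>J. card S = i}. c (card S) * c (n - card S)) = (n choose i) * c i * c (n - i)"
      by simp
  qed
  finally show ?thesis by (simp add: A_def c_def num_regions_def)
qed

end
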